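(* Assume the standing setting below. Let $\alpha\in(0,1/6]$ with $\alpha n$ an integer, let $P_1,P_2\subseteq X$ be disjoint with $|P_1|=|P_2|=\alpha n$, let $T\subseteq X$ be nonempty, and set $\psi:=\frac{1}{3\alpha}R_{2\alpha(k+1)\phi_\alpha}(P_2,T)$. Define $F_b:=\mathrm{far}_{k\phi_\alpha}(X\setminus P_1,T)$, let $\mathcal{B}_b$ be a $(\phi_\alpha/3)$-linear bin division of $(X\setminus P_1)\setminus F_b$ with respect to $T$; define $F_c:=\mathrm{far}_{4(k+1)\phi_\alpha}(X\setminus P_1,T)$ and let $\mathcal{B}_c$ be a $(\phi_\alpha/3)$-linear bin division of $(X\setminus P_1)\setminus F_c$ with respect to $T$. (a) If each of $F_b$ and $\mathcal{B}_b$ is trivial or well-represented in $P_2$ for $X\setminus P_1$, then $\psi\le R_{k\phi_\alpha}(X,T)$. (b) If each of $F_c$ and $\mathcal{B}_c$ is trivial or well-represented in $P_2$ for $X\setminus P_1$, then $\frac19 R_{5(k+1)\phi_\alpha}(X\setminus P_1,T)\le\psi$.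
   Context: Standing setting: $(X,\rho)$ is a finite metric space with $|X|=n$; $k\ge2$ is an integer and $\delta\in(0,1)$; $\log$ is the natural logarithm; for $\alpha>0$, $\phi_\alpha:=150\log(32k/\delta)/\alpha$. For nonempty $T\subseteq X$, $\rho(x,T):=\min_{y\in T}\rho(x,y)$ and $R(S,T):=\sum_{x\in S}\rho(x,T)$; ties are broken by a fixed ordering of $X$. For $S\subseteq X$ and real $r\ge0$, $\mathrm{far}_r(S,T)$ is the set of the $\lceil r\rceil$ points of $S$ furthest from $T$ (ties broken by the fixed ordering); if $|S|<r$, $\mathrm{far}_r(S,T):=S$ and it is called a trivial far set. $R_r(S,T):=R(S\setminus\mathrm{far}_r(S,T),T)$. For finite $W$, $A,B\subseteq W$, $B$ is well-represented in $A$ for $W$ if $|B\cap A|/|B|\in[r/2,\frac32 r]$ with $r=|A|/|W|$; a bin division is well-represented if all its bins are. A $z$-linear bin division ($z>0$) of $W$ with respect to $T$ is a partition $(\mathcal{B}(1),\ldots,\mathcal{B}(L))$ of $W$ with: (1) if $z\le|W|$, $|\mathcal{B}(i)|\ge z(i+1)/2$ for all $i$; otherwise it is trivial, $\mathcal{B}(1):=W$; (2) $|\mathcal{B}(1)|\le\frac52 z$; (3) $|\mathcal{B}(i+1)|/|\mathcal{B}(i)|\le3/2$; (4) $\rho(x,T)\ge\rho(x',T)$ whenever $x\in\mathcal{B}(i)$, $x'\in\mathcal{B}(i+1)$. *)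

theory Defs
  imports Complex_Main
begin

definition finite_metric_space :: "'a set \<Rightarrow> ('a \<Rightarrow> 'a \<Rightarrow> real) \<Rightarrow> bool" where
  "finite_metric_space X rho \<longleftrightarrow> finite X \<and>
     (\<forall>x\<in>X. \<forall>y\<in>X. rho x y \<ge> 0) \<and>
     (\<forall>x\<in>X. \<forall>y\<in>X. rho x y = 0 \<longleftrightarrow> x = y) \<and>
     (\<forall>x\<in>X. \<forall>y\<in>X. rho x y = rho y x) \<and>
     (\<forall>x\<in>X. \<forall>y\<in>X. \<forall>z\<in>X. rho x z \<le> rho x y + rho y z)"

definition phi :: "nat \<Rightarrow> real \<Rightarrow> real \<Rightarrow> real" where
  "phi k \<delta> \<alpha> = 150 * ln (32 * real k / \<delta>) / \<alpha>"

definition distT :: "('a \<Rightarrow> 'a \<Rightarrow> real) \<Rightarrow> 'a \<Rightarrow> 'a set \<Rightarrow> real" where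
  "distT rho x T = Min ((\<lambda>y. rho x y) ` T)"

definition cost :: "('a \<Rightarrow> 'a \<Rightarrow> real) \<Rightarrow> 'a set \<Rightarrow> 'a set \<Rightarrow> real" where
  "cost rho S T = (\<Sum>x\<in>S. distT rho x T)"

text \<open>Strict "furthest-first" ranking: y comes before x; ties in the distance
  to T are broken by the fixed linear order of the type (smaller first).\<close>
definition further :: "('a::linorder \<Rightarrow> 'a \<Rightarrow> real) \<Rightarrow> 'a set \<Rightarrow> 'a \<Rightarrow> 'a \<Rightarrow> bool" where
  "further rho T y x \<longleftrightarrow> distT rho y T > distT rho x T \<or>
                         (distT rho y T = distT rho x T \<and> y < x)"

text \<open>far_r(S,T): the ceil(r) points of S furthest from T, or S if |S| < r.\<close>
definition far :: "('a::linorder \<Rightarrow> 'a \<Rightarrow> real) \<Rightarrow> real \<Rightarrow> 'a set \<Rightarrow> 'a set \<Rightarrow> 'a set" where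
  "far rho r S T = (if real (card S) < r then S
      else {x\<in>S. card {y\<in>S. further rho T y x} < nat \<lceil>r\<rceil>})"

definition trivial_far :: "real \<Rightarrow> 'a set \<Rightarrow> bool" where
  "trivial_far r S \<longleftrightarrow> real (card S) < r"

definition cost_r :: "('a::linorder \<Rightarrow> 'a \<Rightarrow> real) \<Rightarrow> real \<Rightarrow> 'a set \<Rightarrow> 'a set \<Rightarrow> real" where
  "cost_r rho r S T = cost rho (S - far rho r S T) T"

definition well_represented :: "'a set \<Rightarrow> 'a set \<Rightarrow> 'a set \<Rightarrow> bool" where
  "well_represented W A B \<longleftrightarrow>
     (let r = real (card A) / real (card W);
          q = real (card (B \<inter> A)) / real (card B)
      in r / 2 \<le> q \<and> q \<le> 3 / 2 * r)"

definition well_represented_bins :: "'a set \<Rightarrow> 'a set \<Rightarrow> 'a set list \<Rightarrow> bool" where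
  "well_represented_bins W A Bs \<longleftrightarrow> (\<forall>B\<in>set Bs. well_represented W A B)"

text \<open>z-linear bin division of W with respect to T. Bin B(i) (1-indexed) is Bs!(i-1).\<close>
definition linear_bin_division ::
  "('a \<Rightarrow> 'a \<Rightarrow> real) \<Rightarrow> real \<Rightarrow> 'a set \<Rightarrow> 'a set \<Rightarrow> 'a set list \<Rightarrow> bool" where
  "linear_bin_division rho z W T Bs \<longleftrightarrow>
     Bs \<noteq> [] \<and> \<Union>(set Bs) = W \<and>
     (\<forall>i<length Bs. \<forall>j<length Bs. i \<noteq> j \<longrightarrow> Bs!i \<inter> Bs!j = {}) \<and>
     (if z \<le> real (card W)
      then (\<forall>i<length Bs. real (card (Bs!i)) \<ge> z * (real i + 2) / 2)
      else Bs = [W]) \<and>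
     real (card (Bs!0)) \<le> 5 / 2 * z \<and>
     (\<forall>i. i + 1 < length Bs \<longrightarrow> real (card (Bs!(i+1))) / real (card (Bs!i)) \<le> 3 / 2) \<and>
     (\<forall>i. i + 1 < length Bs \<longrightarrow> (\<forall>x\<in>Bs!i. \<forall>x'\<in>Bs!(i+1). distT rho x T \<ge> distT rho x' T))"

definition trivial_bin_division :: "real \<Rightarrow> 'a set \<Rightarrow> bool" where
  "trivial_bin_division z W \<longleftrightarrow> \<not> (z \<le> real (card W))"

end

theory Submission
  imports Defs
begin


lemma nat_le_ceil:
  assumes "real c \<le> x" shows "c \<le> nat \<lceil>x\<rceil>"
proof -
  have "x \<le> real_of_int \<lceil>x\<rceil>" by (rule le_of_int_ceiling)
  then have "real c \<le> real_of_int \<lceil>x\<rceil>" using assms by linarith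
  then have "int c \<le> \<lceil>x\<rceil>" by (metis of_int_of_nat_eq of_int_le_iff)
  then show ?thesis by (metis nat_int nat_mono)
qed

lemma further_irrefl: "\<not> further rho T x x" by (simp add: further_def)
lemma further_trans: "further rho T x y \<Longrightarrow> further rho T y z \<Longrightarrow> further rho T x z"
  by (auto simp: further_def)
lemma further_total: "(x::'a::linorder) \<noteq> y \<Longrightarrow> further rho T x y \<or> further rho T y x"
  by (auto simp: further_def neq_iff)
lemma further_dist: "further rho T y x \<Longrightarrow> distT rho x T \<le> distT rho y T"
  by (auto simp: further_def)

lemma rank_less:
  assumes "finite S" "y \<in> S" "further rho T y x"
  shows "card {z\<in>S. further rho T z y} < card {z\<in>S. further rho T z x}"
proof (rule psubset_card_mono)
  show "finite {z\<in>S. further rho T z x}" using assms by simp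
  show "{z\<in>S. further rho T z y} \<subset> {z\<in>S. further rho T z x}"
    using assms further_trans[of rho T _ y x] further_irrefl[of rho T y] by blast
qed

lemma rank_inj:
  fixes S :: "'a::linorder set"
  assumes "finite S" shows "inj_on (\<lambda>x. card {z\<in>S. further rho T z x}) S"
proof (rule inj_onI)
  fix x y assume xy: "x \<in> S" "y \<in> S" "card {z\<in>S. further rho T z x} = card {z\<in>S. further rho T z y}"
  show "x = y"
  proof (rule ccontr)
    assume "x \<noteq> y"
    then have "further rho T x y \<or> further rho T y x" by (rule further_total)
    then show False
    proof
      assume "further rho T x y"
      then have "card {z\<in>S. further rho T z x} < card {z\<in>S. further rho T z y}"
        by (rule rank_less[OF assms xy(1)])
      then show False using xy(3) by simp
    next
      assume "further rho T y x"
      then have "card {z\<in>S. further rho T z y} < card {z\<in>S. further rho T z x}"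
        by (rule rank_less[OF assms xy(2)])
      then show False using xy(3) by simp
    qed
  qed
qed

lemma rank_image:
  fixes S :: "'a::linorder set"
  assumes "finite S" shows "(\<lambda>x. card {z\<in>S. further rho T z x}) ` S = {..<card S}"
proof (rule card_subset_eq)
  show "finite {..<card S}" by simp
  show "(\<lambda>x. card {z\<in>S. further rho T z x}) ` S \<subseteq> {..<card S}"
  proof
    fix v assume "v \<in> (\<lambda>x. card {z\<in>S. further rho T z x}) ` S"
    then obtain x where x: "x \<in> S" "v = card {z\<in>S. further rho T z x}" by blast
    have "{z\<in>S. further rho T z x} \<subset> S" using x further_irrefl[of rho T x] by blast
    then show "v \<in> {..<card S}" using x assms psubset_card_mono by auto
  qed
  show "card ((\<lambda>x. card {z\<in>S. further rho T z x}) ` S) = card {..<card S}"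
    using card_image[OF rank_inj[OF assms]] by simp
qed

lemma card_far:
  fixes S :: "'a::linorder set"
  assumes "finite S" "\<not> real (card S) < r"
  shows "card (far rho r S T) = nat \<lceil>r\<rceil>"
proof -
  let ?rk = "\<lambda>x. card {z\<in>S. further rho T z x}"
  let ?m = "nat \<lceil>r\<rceil>"
  have far: "far rho r S T = {x\<in>S. ?rk x < ?m}" using assms(2) by (simp add: far_def)
  have m: "?m \<le> card S" using assms(2)
    by (metis ceiling_le_iff nat_le_iff not_less of_int_of_nat_eq)
  obtain mm where mm: "mm = ?m" by blast
  have m2: "mm \<le> card S" using m mm by simp
  have "card {x\<in>S. ?rk x < mm} = card (?rk ` {x\<in>S. ?rk x < mm})"
    by (rule card_image[symmetric], rule inj_on_subset[OF rank_inj[OF assms(1)]]) auto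
  also have "?rk ` {x\<in>S. ?rk x < mm} = {v\<in>?rk ` S. v < mm}" by auto
  also have "\<dots> = {v\<in>{..<card S}. v < mm}" using rank_image[OF assms(1), of rho T] by simp
  also have "\<dots> = {..<mm}" using m2 by auto
  finally show ?thesis using far mm by simp
qed

lemma far_subset: "far rho r S T \<subseteq> S" by (auto simp: far_def)

lemma far_up:
  assumes "finite S" "x \<in> far rho r S T" "y \<in> S" "further rho T y x"
  shows "y \<in> far rho r S T"
proof (cases "real (card S) < r")
  case True then show ?thesis using assms by (simp add: far_def)
next
  case False
  then show ?thesis using assms rank_less[OF assms(1,3,4)] by (auto simp: far_def)
qed

lemma far_bottom:
  fixes S :: "'a::linorder set"
  assumes "finite S" "x \<in> S - far rho r S T" "y \<in> far rho r S T"
  shows "distT rho x T \<le> distT rho y T"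
proof -
  have "x \<noteq> y" using assms by auto
  then have "further rho T x y \<or> further rho T y x" by (rule further_total)
  then show ?thesis using far_up[OF assms(1) assms(3), of x] assms further_dist by blast
qed

lemma cross:
  fixes d :: "'a \<Rightarrow> real"
  assumes "\<And>x y. x \<in> A \<Longrightarrow> y \<in> C \<Longrightarrow> d y \<le> d x"
  shows "real (card A) * sum d C \<le> real (card C) * sum d A"
proof -
  have "real (card A) * sum d C = (\<Sum>x\<in>A. \<Sum>y\<in>C. d y)" by simp
  also have "\<dots> \<le> (\<Sum>x\<in>A. \<Sum>y\<in>C. d x)" by (intro sum_mono) (use assms in auto)
  also have "\<dots> = real (card C) * sum d A" by (simp add: sum_distrib_left)
  finally show ?thesis .
qed

lemma sum_bottom:
  fixes d :: "'a \<Rightarrow> real"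
  assumes "finite A" "S \<subseteq> A" "B \<subseteq> A" "\<And>x y. x\<in>S \<Longrightarrow> y\<in>A-S \<Longrightarrow> d x \<le> d y"
    "card S \<le> card B" "\<And>x. x\<in>A \<Longrightarrow> 0 \<le> d x"
  shows "sum d S \<le> sum d B"
proof -
  have fin: "finite S" "finite B" using assms finite_subset by auto
  have e1: "sum d S = sum d (S\<inter>B) + sum d (S-B)" by (rule sum.Int_Diff[OF fin(1)])
  have e2: "sum d B = sum d (S\<inter>B) + sum d (B-S)"
    using sum.Int_Diff[OF fin(2), of d S] by (simp add: Int_commute)
  have c1: "card S = card (S\<inter>B) + card (S-B)" using card_Int_Diff[OF fin(1)] by simp
  have c2: "card B = card (S\<inter>B) + card (B-S)" using card_Int_Diff[OF fin(2), of S] by (simp add: Int_commute)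
  have cc: "card (S-B) \<le> card (B-S)" using c1 c2 assms(5) by linarith
  have nn: "0 \<le> sum d (B-S)" using assms(3,6) by (intro sum_nonneg) auto
  have cr: "real (card (B-S)) * sum d (S-B) \<le> real (card (S-B)) * sum d (B-S)"
    by (rule cross) (use assms(2,3,4) in auto)
  also have "\<dots> \<le> real (card (B-S)) * sum d (B-S)"
    using cc nn by (intro mult_right_mono) auto
  finally have k: "real (card (B-S)) * sum d (S-B) \<le> real (card (B-S)) * sum d (B-S)" .
  have "sum d (S-B) \<le> sum d (B-S)"
  proof (cases "card (B-S) = 0")
    case True
    then have "card (S-B) = 0" using cc by simp
    then have e: "S - B = {}" using fin by auto
    have "sum d (S-B) = 0" by (simp only: e sum.empty)
    then show ?thesis using nn by linarith
  next
    case False then show ?thesis using k by simp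
  qed
  then show ?thesis using e1 e2 by simp
qed

lemma wr_upper:
  assumes "well_represented W A B" "card B > 0"
  shows "real (card (B\<inter>A)) \<le> 3/2 * (real (card A) / real (card W)) * real (card B)"
proof -
  have q: "real (card (B\<inter>A)) / real (card B) \<le> 3/2 * (real (card A) / real (card W))"
    using assms(1) unfolding well_represented_def Let_def by linarith
  have "real (card (B\<inter>A)) = real (card (B\<inter>A)) / real (card B) * real (card B)" using assms(2) by simp
  also have "\<dots> \<le> 3/2 * (real (card A) / real (card W)) * real (card B)"
    by (rule mult_right_mono[OF q]) simp
  finally show ?thesis .
qed

lemma wr_lower:
  assumes "well_represented W A B" "card B > 0"
  shows "1/2 * (real (card A) / real (card W)) * real (card B) \<le> real (card (B\<inter>A))"
proof -
  have q: "1/2 * (real (card A) / real (card W)) \<le> real (card (B\<inter>A)) / real (card B)"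
    using assms(1) unfolding well_represented_def Let_def by simp
  have "1/2 * (real (card A) / real (card W)) * real (card B) \<le> real (card (B\<inter>A)) / real (card B) * real (card B)"
    by (rule mult_right_mono[OF q]) simp
  also have "\<dots> = real (card (B\<inter>A))" using assms(2) by simp
  finally show ?thesis .
qed

lemma bins_union:
  assumes "\<Union>(set Bs) = V" "\<forall>i<length Bs. \<forall>j<length Bs. i \<noteq> j \<longrightarrow> Bs!i \<inter> Bs!j = {}" "Bs \<noteq> []"
  shows "V - Bs!0 = (\<Union>i\<in>{1..<length Bs}. Bs!i)" "V = (\<Union>i\<in>{..<length Bs}. Bs!i)"
proof -
  show V: "V = (\<Union>i\<in>{..<length Bs}. Bs!i)" using assms(1) by (auto simp: set_conv_nth)
  show "V - Bs!0 = (\<Union>i\<in>{1..<length Bs}. Bs!i)"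
  proof
    show "V - Bs!0 \<subseteq> (\<Union>i\<in>{1..<length Bs}. Bs!i)"
    proof
      fix x assume x: "x \<in> V - Bs!0"
      then obtain i where i: "i < length Bs" "x \<in> Bs!i" using V by auto
      have "i \<noteq> 0"
      proof
        assume "i = 0" then show False using i x by simp
      qed
      then show "x \<in> (\<Union>i\<in>{1..<length Bs}. Bs!i)" using i by auto
    qed
    show "(\<Union>i\<in>{1..<length Bs}. Bs!i) \<subseteq> V - Bs!0"
      using V assms(2,3) by fastforce
  qed
qed

lemma sum_bins:
  fixes d :: "'a \<Rightarrow> real"
  assumes "finite V" "\<Union>(set Bs) = V" "\<forall>i<length Bs. \<forall>j<length Bs. i \<noteq> j \<longrightarrow> Bs!i \<inter> Bs!j = {}"
    "I \<subseteq> {..<length Bs}"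
  shows "sum d (\<Union>i\<in>I. Bs!i \<inter> P) = (\<Sum>i\<in>I. sum d (Bs!i \<inter> P))"
proof (rule sum.UNION_disjoint)
  show "finite I" using assms(4) finite_subset by blast
  show "\<forall>i\<in>I. finite (Bs ! i \<inter> P)"
  proof
    fix i assume "i \<in> I"
    then have "Bs!i \<in> set Bs" using assms(4) by auto
    then have "Bs!i \<subseteq> V" using assms(2) by auto
    then show "finite (Bs ! i \<inter> P)" using assms(1) finite_subset by blast
  qed
  show "\<forall>i\<in>I. \<forall>j\<in>I. i \<noteq> j \<longrightarrow> Bs ! i \<inter> P \<inter> (Bs ! j \<inter> P) = {}" using assms(3,4) by blast
qed



lemma part_a:
  fixes X :: "'a::linorder set" and rho :: "'a \<Rightarrow> 'a \<Rightarrow> real"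
    and k :: nat and \<phi> \<alpha> :: real and P1 P2 T :: "'a set" and Bb :: "'a set list"
  assumes fin: "finite X" and nn: "\<And>x. x \<in> X \<Longrightarrow> 0 \<le> distT rho x T"
    and k: "k \<ge> 2" and \<phi>: "\<phi> \<ge> 2"
    and \<alpha>: "0 < \<alpha>" "\<alpha> \<le> 1/6"
    and P: "P1 \<subseteq> X" "P2 \<subseteq> X" "P1 \<inter> P2 = {}"
      "real (card P1) = \<alpha> * real (card X)" "real (card P2) = \<alpha> * real (card X)"
    and Bb: "linear_bin_division rho (\<phi> / 3)
              ((X - P1) - far rho (real k * \<phi>) (X - P1) T) T Bb"
    and h1: "trivial_far (real k * \<phi>) (X - P1) \<or>
      well_represented (X - P1) P2 (far rho (real k * \<phi>) (X - P1) T)"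
    and h2: "trivial_bin_division (\<phi> / 3)
        ((X - P1) - far rho (real k * \<phi>) (X - P1) T) \<or>
      well_represented_bins (X - P1) P2 Bb"
  shows "1 / (3 * \<alpha>) * cost_r rho (2 * \<alpha> * (real k + 1) * \<phi>) P2 T
         \<le> cost_r rho (real k * \<phi>) X T"
proof -
  define d where "d = (\<lambda>x. distT rho x T)"
  define W where "W = X - P1"
  define n where "n = real (card X)"
  define FB where "FB = far rho (real k * \<phi>) W T"
  define W' where "W' = W - FB"
  define FX where "FX = far rho (real k * \<phi>) X T"
  define F2 where "F2 = far rho (2 * \<alpha> * (real k + 1) * \<phi>) P2 T"
  have nnd: "\<And>x. x \<in> X \<Longrightarrow> 0 \<le> d x" using nn d_def by simp
  have rhs: "cost_r rho (real k * \<phi>) X T = sum d (X - FX)"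
    by (simp add: cost_r_def cost_def FX_def d_def)
  have lhs: "cost_r rho (2 * \<alpha> * (real k + 1) * \<phi>) P2 T = sum d (P2 - F2)"
    by (simp add: cost_r_def cost_def F2_def d_def)
  have rhs_nn: "0 \<le> sum d (X - FX)" using nnd by (intro sum_nonneg) auto
  show ?thesis
  proof (cases "real (card P2) < 2 * \<alpha> * (real k + 1) * \<phi>")
    case True
    then have "F2 = P2" by (simp add: F2_def far_def)
    then show ?thesis using lhs rhs rhs_nn by simp
  next
    case False
    note nt2 = False
    have e2: "2 * \<alpha> * (real k + 1) * \<phi> = \<alpha> * (2 * (real k * \<phi>) + 2 * \<phi>)"
      by (simp add: algebra_simps)
    have "\<alpha> * (2 * (real k * \<phi>) + 2 * \<phi>) \<le> \<alpha> * n" using False P(5) e2 n_def by simp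
    then have n_ge: "n \<ge> 2 * (real k * \<phi>) + 2 * \<phi>" using \<alpha>(1) by simp
    have kphi: "real k * \<phi> \<ge> 2 * \<phi>" using k \<phi>
      by (intro mult_right_mono) auto
    have finP1: "finite P1" using P(1) fin finite_subset by blast
    have finW: "finite W" using fin W_def by simp
    have fin2: "finite P2" using P(2) fin finite_subset by blast
    have cW: "real (card W) = (1 - \<alpha>) * n"
    proof -
      have "card W = card X - card P1" using card_Diff_subset[OF finP1 P(1)] W_def by simp
      moreover have "card P1 \<le> card X" using card_mono[OF fin P(1)] .
      ultimately have "real (card W) = n - real (card P1)" using n_def by simp
      then show ?thesis using P(4) n_def by (simp add: algebra_simps)
    qed
    have n56: "(1 - \<alpha>) * n \<ge> 5/6 * n" using \<alpha> n_def
      by (intro mult_right_mono) auto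
    have P2W: "P2 \<subseteq> W" using P by (auto simp: W_def)
    have ntW: "\<not> real (card W) < real k * \<phi>" using cW n56 n_ge kphi \<phi> by linarith
    have cFB: "card FB = nat \<lceil>real k * \<phi>\<rceil>" using card_far[OF finW ntW] FB_def by simp
    have kphi0: "real k * \<phi> \<ge> 0" using kphi \<phi> by linarith
    have cFBr: "real (card FB) \<le> real k * \<phi> + 1" "real k * \<phi> \<le> real (card FB)"
      using cFB kphi0 of_int_ceiling_le_add_one[of "real k * \<phi>"] le_of_int_ceiling[of "real k * \<phi>"]
      by auto
    have FBW: "FB \<subseteq> W" by (simp add: FB_def far_subset)
    have cW': "real (card W') = real (card W) - real (card FB)"
      using card_Diff_subset[OF finite_subset[OF FBW finW] FBW] card_mono[OF finW FBW] W'_def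
      by simp
    have ntB: "\<phi>/3 \<le> real (card W')" using cW' cW n56 n_ge kphi \<phi> cFBr by linarith
    have wrb: "well_represented_bins W P2 Bb"
      using h2 ntB by (auto simp: trivial_bin_division_def W'_def FB_def W_def)
    have wrF: "well_represented W P2 FB" using h1 ntW by (simp add: trivial_far_def FB_def W_def)
    have Bb': "linear_bin_division rho (\<phi>/3) W' T Bb" using Bb by (simp add: W'_def FB_def W_def)
    have B1: "Bb \<noteq> []" "\<Union>(set Bb) = W'" "\<forall>i<length Bb. \<forall>j<length Bb. i \<noteq> j \<longrightarrow> Bb!i \<inter> Bb!j = {}"
      "\<forall>i<length Bb. real (card (Bb!i)) \<ge> \<phi>/3 * (real i + 2)/2"
      "real (card (Bb!0)) \<le> 5/2*(\<phi>/3)"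
      "\<forall>i. i+1 < length Bb \<longrightarrow> real (card (Bb!(i+1))) / real (card (Bb!i)) \<le> 3/2"
      "\<forall>i. i+1 < length Bb \<longrightarrow> (\<forall>x\<in>Bb!i. \<forall>x'\<in>Bb!(i+1). d x' \<le> d x)"
      using Bb' ntB unfolding linear_bin_division_def d_def by auto
    have pos: "card (Bb!i) > 0" if "i < length Bb" for i
    proof -
      have "\<phi>/3 * (real i + 2)/2 > 0" using \<phi> by simp
      moreover have "\<phi>/3 * (real i + 2)/2 \<le> real (card (Bb!i))" using B1(4) that by blast
      ultimately have "0 < real (card (Bb!i))" by linarith
      then show ?thesis by simp
    qed
    have wri: "well_represented W P2 (Bb!i)" if "i < length Bb" for i
      using wrb that by (auto simp: well_represented_bins_def)
    define r where "r = real (card P2) / real (card W)"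
    have npos: "n > 0" using n_ge \<phi> kphi by linarith
    have r_eq: "r = \<alpha> / (1 - \<alpha>)" using r_def P(5) cW npos n_def by simp
    have r_le: "r \<le> 6/5 * \<alpha>"
    proof -
      have "0 \<le> \<alpha> * (1 - 6*\<alpha>)" using \<alpha> by simp
      then have "\<alpha> \<le> 6/5 * \<alpha> * (1 - \<alpha>)" by (simp add: algebra_simps)
      then show ?thesis using r_eq \<alpha> by (simp add: pos_divide_le_eq)
    qed
    have r_nn: "0 \<le> r" using r_def by simp
    have c1: "real (card (FB \<inter> P2)) \<le> 3/2 * r * real (card FB)"
    proof -
      have "card FB > 0" using cFBr kphi \<phi> by linarith
      then show ?thesis using wr_upper[OF wrF] r_def by simp
    qed
    have c2: "real (card (Bb!0 \<inter> P2)) \<le> 3/2 * r * real (card (Bb!0))"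
      using wr_upper[OF wri pos, of 0] B1(1) r_def by simp
    have m1: "r * real (card FB) \<le> (6/5*\<alpha>) * (real k * \<phi> + 1)"
      using r_le cFBr r_nn \<alpha> by (intro mult_mono) auto
    have m2: "r * real (card (Bb!0)) \<le> (6/5*\<alpha>) * (5/6 * \<phi>)"
      using r_le B1(5) r_nn \<alpha> by (intro mult_mono) auto
    have a1: "\<alpha> * \<phi> \<ge> \<alpha> * 2" using \<alpha> \<phi> by (intro mult_left_mono) auto
    have a2: "\<alpha> * (real k * \<phi>) \<ge> \<alpha> * (2 * \<phi>)" using \<alpha> kphi by (intro mult_left_mono) auto
    have cU: "card ((FB \<union> Bb!0) \<inter> P2) \<le> card (FB \<inter> P2) + card (Bb!0 \<inter> P2)"
      by (simp add: Int_Un_distrib2 card_Un_le)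
    have c3: "real (card ((FB \<union> Bb!0) \<inter> P2)) \<le> 2 * \<alpha> * (real k + 1) * \<phi>"
    proof -
      have "real (card ((FB \<union> Bb!0) \<inter> P2)) \<le> real (card (FB \<inter> P2)) + real (card (Bb!0 \<inter> P2))"
        using of_nat_mono[OF cU] by simp
      also have "\<dots> \<le> 3/2 * (r * real (card FB)) + 3/2 * (r * real (card (Bb!0)))"
        using c1 c2 by (simp only: mult.assoc)
      also have "\<dots> \<le> 3/2 * ((6/5*\<alpha>) * (real k * \<phi> + 1)) + 3/2 * ((6/5*\<alpha>) * (5/6 * \<phi>))"
        using m1 m2 by linarith
      also have "\<dots> = 9/5 * (\<alpha> * (real k * \<phi>)) + 9/5 * \<alpha> + 3/2 * (\<alpha> * \<phi>)"
        by (simp add: algebra_simps)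
      also have "\<dots> \<le> \<alpha> * (2 * (real k * \<phi>) + 2 * \<phi>)"
      proof -
        have "\<alpha> * (2 * (real k * \<phi>) + 2 * \<phi>) = 2 * (\<alpha> * (real k * \<phi>)) + 2 * (\<alpha> * \<phi>)"
          by (simp add: algebra_simps)
        moreover have "\<alpha> * (2 * \<phi>) = 2 * (\<alpha> * \<phi>)" by simp
        ultimately show ?thesis using a1 a2 by linarith
      qed
      finally have "real (card ((FB \<union> Bb!0) \<inter> P2)) \<le> \<alpha> * (2 * (real k * \<phi>) + 2 * \<phi>)" .
      then show ?thesis using e2 by linarith
    qed
    have cF2: "card F2 = nat \<lceil>2 * \<alpha> * (real k + 1) * \<phi>\<rceil>" using card_far[OF fin2 nt2] F2_def by simp
    have c4: "card ((FB \<union> Bb!0) \<inter> P2) \<le> card F2"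
      unfolding cF2 by (rule nat_le_ceil[OF c3])
    have F2P: "F2 \<subseteq> P2" by (simp add: F2_def far_subset)
    have cc: "card (P2 - F2) \<le> card (P2 - (FB \<union> Bb!0))"
    proof -
      have "card (P2 - F2) = card P2 - card F2" using card_Diff_subset[OF finite_subset[OF F2P fin2] F2P] .
      moreover have "card (P2 - (FB \<union> Bb!0)) = card P2 - card (P2 \<inter> (FB \<union> Bb!0))"
        by (rule card_Diff_subset_Int) (use fin2 in auto)
      ultimately show ?thesis using c4 by (simp add: Int_commute)
    qed
    have s1: "sum d (P2 - F2) \<le> sum d (P2 - (FB \<union> Bb!0))"
    proof (rule sum_bottom[OF fin2])
      show "\<And>x y. x \<in> P2 - F2 \<Longrightarrow> y \<in> P2 - (P2 - F2) \<Longrightarrow> d x \<le> d y"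
        using far_bottom[OF fin2] F2_def d_def by auto
      show "\<And>x. x \<in> P2 \<Longrightarrow> 0 \<le> d x" using nnd P(2) by auto
    qed (use cc in auto)
    have U: "P2 - (FB \<union> Bb!0) = (\<Union>i\<in>{1..<length Bb}. Bb!i \<inter> P2)"
    proof -
      have "W' - Bb!0 = (\<Union>i\<in>{1..<length Bb}. Bb!i)" using bins_union(1)[OF B1(2,3,1)] .
      moreover have "P2 - (FB \<union> Bb!0) = (W' - Bb!0) \<inter> P2" using P2W W'_def by auto
      ultimately show ?thesis by auto
    qed
    have finW': "finite W'" using finW W'_def by simp
    have s2: "sum d (P2 - (FB \<union> Bb!0)) = (\<Sum>i\<in>{1..<length Bb}. sum d (Bb!i \<inter> P2))"
      unfolding U by (rule sum_bins[OF finW' B1(2,3)]) auto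
    obtain L where L: "length Bb = Suc L" using B1(1) by (cases Bb) auto
    have s3: "(\<Sum>i\<in>{1..<length Bb}. sum d (Bb!i \<inter> P2)) = (\<Sum>j<L. sum d (Bb!(Suc j) \<inter> P2))"
      unfolding L using sum.shift_bounds_Suc_ivl[of "\<lambda>i. sum d (Bb!i \<inter> P2)" 0 L]
      by (simp add: atLeast0LessThan)
    have binX: "Bb!i \<subseteq> X" if "i < length Bb" for i
    proof -
      have "Bb!i \<in> set Bb" using that by simp
      then show ?thesis using B1(2) W'_def W_def by auto
    qed
    have chain: "sum d (Bb!(Suc j) \<inter> P2) \<le> 9/4 * r * sum d (Bb!j)" if j: "j < L" for j
    proof -
      have j1: "Suc j < length Bb" "j < length Bb" using j L by auto
      have cr: "real (card (Bb!j)) * sum d (Bb!(Suc j) \<inter> P2) \<le> real (card (Bb!(Suc j) \<inter> P2)) * sum d (Bb!j)"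
        by (rule cross) (use B1(7) j1 in auto)
      have w: "real (card (Bb!(Suc j) \<inter> P2)) \<le> 3/2 * r * real (card (Bb!(Suc j)))"
        using wr_upper[OF wri[OF j1(1)] pos[OF j1(1)]] r_def by simp
      have rt: "real (card (Bb!(Suc j))) \<le> 3/2 * real (card (Bb!j))"
        using B1(6) j1 pos[OF j1(2)] by (auto simp: divide_simps)
      have w2: "real (card (Bb!(Suc j) \<inter> P2)) \<le> 9/4 * r * real (card (Bb!j))"
      proof -
        have "3/2 * r * real (card (Bb!(Suc j))) \<le> 3/2 * r * (3/2 * real (card (Bb!j)))"
          using rt r_nn by (intro mult_left_mono) auto
        then show ?thesis using w by simp
      qed
      have sn: "0 \<le> sum d (Bb!j)" using nnd binX[OF j1(2)] by (intro sum_nonneg) auto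
      have "real (card (Bb!j)) * sum d (Bb!(Suc j) \<inter> P2) \<le> (9/4 * r * real (card (Bb!j))) * sum d (Bb!j)"
        using cr w2 sn by (meson mult_right_mono order_trans)
      also have "\<dots> = real (card (Bb!j)) * (9/4 * r * sum d (Bb!j))" by simp
      finally show ?thesis using pos[OF j1(2)] by simp
    qed
    have s4: "(\<Sum>j<L. sum d (Bb!(Suc j) \<inter> P2)) \<le> 9/4 * r * (\<Sum>j<L. sum d (Bb!j))"
    proof -
      have "(\<Sum>j<L. sum d (Bb!(Suc j) \<inter> P2)) \<le> (\<Sum>j<L. 9/4 * r * sum d (Bb!j))"
        by (rule sum_mono) (use chain in auto)
      moreover have "9/4 * r * (\<Sum>j<L. sum d (Bb!j)) = (\<Sum>j<L. 9/4 * r * sum d (Bb!j))"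
        by (rule sum_distrib_left)
      ultimately show ?thesis by linarith
    qed
    have s5: "(\<Sum>j<L. sum d (Bb!j)) \<le> (\<Sum>j<length Bb. sum d (Bb!j))"
      by (rule sum_mono2) (use L nnd binX in \<open>auto intro!: sum_nonneg\<close>)
    have s6: "(\<Sum>j<length Bb. sum d (Bb!j)) = sum d W'"
    proof -
      have "sum d (\<Union>i\<in>{..<length Bb}. Bb!i \<inter> UNIV) = (\<Sum>i\<in>{..<length Bb}. sum d (Bb!i \<inter> UNIV))"
        by (rule sum_bins[OF finW' B1(2,3)]) auto
      then show ?thesis using bins_union(2)[OF B1(2,3,1)] by simp
    qed
    have ntX: "\<not> real (card X) < real k * \<phi>" using n_def n_ge kphi \<phi> by linarith
    have W'X: "W' \<subseteq> X - FX"
    proof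
      fix x assume x: "x \<in> W'"
      then have xW: "x \<in> W" "x \<notin> FB" using W'_def by auto
      then have "\<not> card {y\<in>W. further rho T y x} < nat \<lceil>real k * \<phi>\<rceil>"
        using ntW by (simp add: FB_def far_def)
      moreover have "card {y\<in>W. further rho T y x} \<le> card {y\<in>X. further rho T y x}"
        using fin W_def by (intro card_mono) auto
      ultimately have "x \<notin> FX" using ntX by (simp add: FX_def far_def)
      then show "x \<in> X - FX" using xW W_def by auto
    qed
    have s7: "sum d W' \<le> sum d (X - FX)"
      by (rule sum_mono2) (use W'X fin nnd in auto)
    have sW'nn: "0 \<le> sum d W'" using nnd W'_def W_def by (intro sum_nonneg) auto 
    have main: "sum d (P2 - F2) \<le> 9/4 * r * sum d W'"
    proof -
      have "9/4 * r * (\<Sum>j<L. sum d (Bb!j)) \<le> 9/4 * r * sum d W'"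
        using s5 s6 r_nn by (intro mult_left_mono) auto
      then show ?thesis using s1 s2 s3 s4 by linarith
    qed
    also have "\<dots> \<le> 9/4 * (6/5*\<alpha>) * sum d W'"
      using r_le sW'nn by (intro mult_right_mono) auto
    finally have "1/(3*\<alpha>) * sum d (P2 - F2) \<le> 1/(3*\<alpha>) * (9/4 * (6/5*\<alpha>) * sum d W')"
      using \<alpha> by (intro mult_left_mono) auto
    also have "\<dots> = 9/10 * sum d W'" using \<alpha> by simp
    also have "\<dots> \<le> sum d (X - FX)" using s7 sW'nn by linarith
    finally show ?thesis using lhs rhs by simp
  qed
qed



lemma part_b:
  fixes X :: "'a::linorder set" and rho :: "'a \<Rightarrow> 'a \<Rightarrow> real"
    and k :: nat and \<phi> \<alpha> :: real and P1 P2 T :: "'a set" and Bc :: "'a set list"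
  assumes fin: "finite X" and nn: "\<And>x. x \<in> X \<Longrightarrow> 0 \<le> distT rho x T"
    and k: "k \<ge> 2" and \<phi>: "\<phi> \<ge> 2"
    and \<alpha>: "0 < \<alpha>" "\<alpha> \<le> 1/6"
    and P: "P1 \<subseteq> X" "P2 \<subseteq> X" "P1 \<inter> P2 = {}"
      "real (card P1) = \<alpha> * real (card X)" "real (card P2) = \<alpha> * real (card X)"
    and Bc: "linear_bin_division rho (\<phi> / 3)
              ((X - P1) - far rho (4 * (real k + 1) * \<phi>) (X - P1) T) T Bc"
    and h1: "trivial_far (4 * (real k + 1) * \<phi>) (X - P1) \<or>
      well_represented (X - P1) P2 (far rho (4 * (real k + 1) * \<phi>) (X - P1) T)"
    and h2: "trivial_bin_division (\<phi> / 3)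
        ((X - P1) - far rho (4 * (real k + 1) * \<phi>) (X - P1) T) \<or>
      well_represented_bins (X - P1) P2 Bc"
  shows "1 / 9 * cost_r rho (5 * (real k + 1) * \<phi>) (X - P1) T
         \<le> 1 / (3 * \<alpha>) * cost_r rho (2 * \<alpha> * (real k + 1) * \<phi>) P2 T"
proof -
  define d where "d = (\<lambda>x. distT rho x T)"
  define W where "W = X - P1"
  define n where "n = real (card X)"
  define FC where "FC = far rho (4 * (real k + 1) * \<phi>) W T"
  define W' where "W' = W - FC"
  define F5 where "F5 = far rho (5 * (real k + 1) * \<phi>) W T"
  define F2 where "F2 = far rho (2 * \<alpha> * (real k + 1) * \<phi>) P2 T"
  have nnd: "\<And>x. x \<in> X \<Longrightarrow> 0 \<le> d x" using nn d_def by simp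
  have lhs: "cost_r rho (5 * (real k + 1) * \<phi>) (X - P1) T = sum d (W - F5)"
    by (simp add: cost_r_def cost_def F5_def d_def W_def)
  have rhs: "cost_r rho (2 * \<alpha> * (real k + 1) * \<phi>) P2 T = sum d (P2 - F2)"
    by (simp add: cost_r_def cost_def F2_def d_def)
  have rhs_nn: "0 \<le> sum d (P2 - F2)" using nnd P(2) by (intro sum_nonneg) auto
  have finP1: "finite P1" using P(1) fin finite_subset by blast
  have finW: "finite W" using fin W_def by simp
  have fin2: "finite P2" using P(2) fin finite_subset by blast
  have WX: "W \<subseteq> X" using W_def by auto
  show ?thesis
  proof (cases "real (card W) < 5 * (real k + 1) * \<phi>")
    case True
    then have "F5 = W" by (simp add: F5_def far_def)
    then show ?thesis using lhs rhs rhs_nn \<alpha> by simp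
  next
    case False
    note nt5 = False
    have e5: "5 * (real k + 1) * \<phi> = 5 * (real k * \<phi>) + 5 * \<phi>" by (simp add: algebra_simps)
    have e4: "4 * (real k + 1) * \<phi> = 4 * (real k * \<phi>) + 4 * \<phi>" by (simp add: algebra_simps)
    have e2: "2 * \<alpha> * (real k + 1) * \<phi> = \<alpha> * (2 * (real k * \<phi>) + 2 * \<phi>)"
      by (simp add: algebra_simps)
    have kphi: "real k * \<phi> \<ge> 2 * \<phi>" using k \<phi>
      by (intro mult_right_mono) auto
    have cW: "real (card W) = (1 - \<alpha>) * n"
    proof -
      have "card W = card X - card P1" using card_Diff_subset[OF finP1 P(1)] W_def by simp
      moreover have "card P1 \<le> card X" using card_mono[OF fin P(1)] .
      ultimately have "real (card W) = n - real (card P1)" using n_def by simp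
      then show ?thesis using P(4) n_def by (simp add: algebra_simps)
    qed
    have cWge: "real (card W) \<ge> 5 * (real k * \<phi>) + 5 * \<phi>" using nt5 e5 by linarith
    have npos: "n > 0"
    proof -
      have "card W \<le> card X" using card_mono[OF fin WX] .
      then show ?thesis using cWge kphi \<phi> n_def by (smt (verit) of_nat_mono)
    qed
    have P2W: "P2 \<subseteq> W" using P by (auto simp: W_def)
    have ntC: "\<not> real (card W) < 4 * (real k + 1) * \<phi>" using cWge e4 kphi \<phi> by linarith
    have cFC: "card FC = nat \<lceil>4 * (real k + 1) * \<phi>\<rceil>" using card_far[OF finW ntC] FC_def by simp
    have kphi0: "4 * (real k + 1) * \<phi> \<ge> 0" using kphi \<phi> e4 by linarith
    have cFCr: "real (card FC) \<le> 4 * (real k + 1) * \<phi> + 1" "4 * (real k + 1) * \<phi> \<le> real (card FC)"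
      using cFC kphi0 of_int_ceiling_le_add_one[of "4 * (real k + 1) * \<phi>"]
        le_of_int_ceiling[of "4 * (real k + 1) * \<phi>"]
      by auto
    have FCW: "FC \<subseteq> W" by (simp add: FC_def far_subset)
    have cW': "real (card W') = real (card W) - real (card FC)"
      using card_Diff_subset[OF finite_subset[OF FCW finW] FCW] card_mono[OF finW FCW] W'_def
      by simp
    have ntB: "\<phi>/3 \<le> real (card W')" using cW' cWge cFCr e4 kphi \<phi> by linarith
    have wrb: "well_represented_bins W P2 Bc"
      using h2 ntB by (auto simp: trivial_bin_division_def W'_def FC_def W_def)
    have wrF: "well_represented W P2 FC" using h1 ntC by (simp add: trivial_far_def FC_def W_def)
    have Bc': "linear_bin_division rho (\<phi>/3) W' T Bc" using Bc by (simp add: W'_def FC_def W_def)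
    have B1: "Bc \<noteq> []" "\<Union>(set Bc) = W'" "\<forall>i<length Bc. \<forall>j<length Bc. i \<noteq> j \<longrightarrow> Bc!i \<inter> Bc!j = {}"
      "\<forall>i<length Bc. real (card (Bc!i)) \<ge> \<phi>/3 * (real i + 2)/2"
      "real (card (Bc!0)) \<le> 5/2*(\<phi>/3)"
      "\<forall>i. i+1 < length Bc \<longrightarrow> real (card (Bc!(i+1))) / real (card (Bc!i)) \<le> 3/2"
      "\<forall>i. i+1 < length Bc \<longrightarrow> (\<forall>x\<in>Bc!i. \<forall>x'\<in>Bc!(i+1). d x' \<le> d x)"
      using Bc' ntB unfolding linear_bin_division_def d_def by auto
    have pos: "card (Bc!i) > 0" if "i < length Bc" for i
    proof -
      have "\<phi>/3 * (real i + 2)/2 > 0" using \<phi> by simp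
      moreover have "\<phi>/3 * (real i + 2)/2 \<le> real (card (Bc!i))" using B1(4) that by blast
      ultimately have "0 < real (card (Bc!i))" by linarith
      then show ?thesis by simp
    qed
    have wri: "well_represented W P2 (Bc!i)" if "i < length Bc" for i
      using wrb that by (auto simp: well_represented_bins_def)
    have binX: "Bc!i \<subseteq> X" if "i < length Bc" for i
    proof -
      have "Bc!i \<in> set Bc" using that by simp
      then show ?thesis using B1(2) W'_def W_def by auto
    qed
    define r where "r = real (card P2) / real (card W)"
    have r_eq: "r = \<alpha> / (1 - \<alpha>)" using r_def P(5) cW npos n_def by simp
    have r_ge: "\<alpha> \<le> r"
    proof -
      have "\<alpha> * (1 - \<alpha>) \<le> \<alpha>" using \<alpha> by (simp add: algebra_simps)
      then show ?thesis using r_eq \<alpha> by (simp add: pos_le_divide_eq)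
    qed
    have r_nn: "0 \<le> r" using r_def by simp
    have c1: "1/2 * r * real (card FC) \<le> real (card (FC \<inter> P2))"
    proof -
      have "card FC > 0" using cFCr kphi \<phi> e4 by linarith
      then show ?thesis using wr_lower[OF wrF] r_def by simp
    qed
    have m1: "\<alpha> * (4 * (real k + 1) * \<phi>) \<le> r * real (card FC)"
      using r_ge cFCr \<alpha> kphi0 by (intro mult_mono) auto
    have cFP: "2 * \<alpha> * (real k + 1) * \<phi> \<le> real (card (FC \<inter> P2))"
      using c1 m1 by (simp add: algebra_simps)
    have nt2: "\<not> real (card P2) < 2 * \<alpha> * (real k + 1) * \<phi>"
    proof -
      have "card (FC \<inter> P2) \<le> card P2" using fin2 by (intro card_mono) auto
      then show ?thesis using cFP by (smt (verit) of_nat_mono)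
    qed
    have cF2: "card F2 = nat \<lceil>2 * \<alpha> * (real k + 1) * \<phi>\<rceil>" using card_far[OF fin2 nt2] F2_def by simp
    have c4: "card F2 \<le> card (FC \<inter> P2)"
    proof -
      have "\<lceil>2 * \<alpha> * (real k + 1) * \<phi>\<rceil> \<le> int (card (FC \<inter> P2))"
        using cFP by (simp add: ceiling_le_iff)
      then show ?thesis by (simp only: cF2 nat_le_iff)
    qed
    have F2FC: "F2 \<subseteq> FC"
    proof
      fix x assume xF: "x \<in> F2"
      then have xP: "x \<in> P2" by (simp add: F2_def far_def split: if_splits)
      show "x \<in> FC"
      proof (rule ccontr)
        assume xn: "x \<notin> FC"
        have sub: "FC \<inter> P2 \<subseteq> {y\<in>P2. further rho T y x}"
        proof
          fix y assume y: "y \<in> FC \<inter> P2"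
          then have "y \<noteq> x" using xn by auto
          then have "further rho T y x \<or> further rho T x y" by (rule further_total)
          moreover have "\<not> further rho T x y"
            using far_up[OF finW, of y rho "4 * (real k + 1) * \<phi>" T x] y xP P2W xn FC_def by auto
          ultimately show "y \<in> {y\<in>P2. further rho T y x}" using y by auto
        qed
        have "card (FC \<inter> P2) \<le> card {y\<in>P2. further rho T y x}"
          using fin2 sub by (intro card_mono) auto
        moreover have "card {y\<in>P2. further rho T y x} < nat \<lceil>2 * \<alpha> * (real k + 1) * \<phi>\<rceil>"
          using xF nt2 by (simp add: F2_def far_def)
        ultimately show False using c4 cF2 by linarith
      qed
    qed
    have s1: "sum d (P2 - FC) \<le> sum d (P2 - F2)"
      by (rule sum_mono2) (use fin2 F2FC nnd P(2) in auto)
    have finW': "finite W'" using finW W'_def by simp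
    have U: "P2 - FC = (\<Union>i\<in>{..<length Bc}. Bc!i \<inter> P2)"
    proof -
      have "W' = (\<Union>i\<in>{..<length Bc}. Bc!i)" using bins_union(2)[OF B1(2,3,1)] .
      moreover have "P2 - FC = W' \<inter> P2" using P2W W'_def by auto
      ultimately show ?thesis by auto
    qed
    have s2: "sum d (P2 - FC) = (\<Sum>i<length Bc. sum d (Bc!i \<inter> P2))"
      unfolding U by (rule sum_bins[OF finW' B1(2,3)]) auto
    obtain L where L: "length Bc = Suc L" using B1(1) by (cases Bc) auto
    have s3: "(\<Sum>j<L. sum d (Bc!j \<inter> P2)) \<le> (\<Sum>i<length Bc. sum d (Bc!i \<inter> P2))"
      by (rule sum_mono2) (use L nnd binX in \<open>auto intro!: sum_nonneg\<close>)
    have chain: "\<alpha> * sum d (Bc!(Suc j)) \<le> 3 * sum d (Bc!j \<inter> P2)" if j: "j < L" for j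
    proof -
      have j1: "Suc j < length Bc" "j < length Bc" using j L by auto
      have cr: "real (card (Bc!j \<inter> P2)) * sum d (Bc!(Suc j)) \<le> real (card (Bc!(Suc j))) * sum d (Bc!j \<inter> P2)"
        by (rule cross) (use B1(7) j1 in auto)
      have w: "1/2 * r * real (card (Bc!j)) \<le> real (card (Bc!j \<inter> P2))"
        using wr_lower[OF wri[OF j1(2)] pos[OF j1(2)]] r_def by simp
      have rt: "real (card (Bc!(Suc j))) \<le> 3/2 * real (card (Bc!j))"
        using B1(6) j1 pos[OF j1(2)] by (auto simp: divide_simps)
      have sn: "0 \<le> sum d (Bc!(Suc j))" using nnd binX[OF j1(1)] by (intro sum_nonneg) auto
      have sn2: "0 \<le> sum d (Bc!j \<inter> P2)" using nnd binX[OF j1(2)] by (intro sum_nonneg) auto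
      have "real (card (Bc!j)) * (r/2 * sum d (Bc!(Suc j))) = (1/2 * r * real (card (Bc!j))) * sum d (Bc!(Suc j))"
        by simp
      also have "\<dots> \<le> real (card (Bc!j \<inter> P2)) * sum d (Bc!(Suc j))"
        using w sn by (intro mult_right_mono) auto
      also have "\<dots> \<le> real (card (Bc!(Suc j))) * sum d (Bc!j \<inter> P2)" using cr .
      also have "\<dots> \<le> (3/2 * real (card (Bc!j))) * sum d (Bc!j \<inter> P2)"
        using rt sn2 by (intro mult_right_mono) auto
      also have "\<dots> = real (card (Bc!j)) * (3/2 * sum d (Bc!j \<inter> P2))" by simp
      finally have "r/2 * sum d (Bc!(Suc j)) \<le> 3/2 * sum d (Bc!j \<inter> P2)"
        using pos[OF j1(2)] by simp
      moreover have "\<alpha> * sum d (Bc!(Suc j)) \<le> r * sum d (Bc!(Suc j))"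
        using r_ge sn by (intro mult_right_mono) auto
      ultimately show ?thesis by linarith
    qed
    have s4: "\<alpha> * (\<Sum>j<L. sum d (Bc!(Suc j))) \<le> 3 * (\<Sum>j<L. sum d (Bc!j \<inter> P2))"
    proof -
      have "(\<Sum>j<L. \<alpha> * sum d (Bc!(Suc j))) \<le> (\<Sum>j<L. 3 * sum d (Bc!j \<inter> P2))"
        by (rule sum_mono) (use chain in auto)
      moreover have "\<alpha> * (\<Sum>j<L. sum d (Bc!(Suc j))) = (\<Sum>j<L. \<alpha> * sum d (Bc!(Suc j)))"
        by (rule sum_distrib_left)
      moreover have "3 * (\<Sum>j<L. sum d (Bc!j \<inter> P2)) = (\<Sum>j<L. 3 * sum d (Bc!j \<inter> P2))"
        by (rule sum_distrib_left)
      ultimately show ?thesis by linarith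
    qed
    have s5: "(\<Sum>j<L. sum d (Bc!(Suc j))) = sum d (W' - Bc!0)"
    proof -
      have "sum d (\<Union>i\<in>{1..<length Bc}. Bc!i \<inter> UNIV) = (\<Sum>i\<in>{1..<length Bc}. sum d (Bc!i \<inter> UNIV))"
        by (rule sum_bins[OF finW' B1(2,3)]) auto
      then have "sum d (W' - Bc!0) = (\<Sum>i\<in>{1..<length Bc}. sum d (Bc!i))"
        using bins_union(1)[OF B1(2,3,1)] by simp
      also have "\<dots> = (\<Sum>j<L. sum d (Bc!(Suc j)))"
        unfolding L using sum.shift_bounds_Suc_ivl[of "\<lambda>i. sum d (Bc!i)" 0 L]
        by (simp add: atLeast0LessThan)
      finally show ?thesis by simp
    qed
    have cF5: "card F5 = nat \<lceil>5 * (real k + 1) * \<phi>\<rceil>" using card_far[OF finW nt5] F5_def by simp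
    have B0W: "Bc!0 \<subseteq> W'"
    proof -
      have "Bc!0 \<in> set Bc" using B1(1) by simp
      then show ?thesis using B1(2) by auto
    qed
    have cc: "card (W - F5) \<le> card (W - (FC \<union> Bc!0))"
    proof -
      have F5W: "F5 \<subseteq> W" by (simp add: F5_def far_subset)
      have sub: "FC \<union> Bc!0 \<subseteq> W" using FCW B0W W'_def by auto
      have "card (W - F5) = card W - card F5" using card_Diff_subset[OF finite_subset[OF F5W finW] F5W] .
      moreover have "card (W - (FC \<union> Bc!0)) = card W - card (FC \<union> Bc!0)"
        using card_Diff_subset[OF finite_subset[OF sub finW] sub] .
      moreover have "card (FC \<union> Bc!0) \<le> card F5"
      proof -
        have "card (FC \<union> Bc!0) \<le> card FC + card (Bc!0)" by (rule card_Un_le)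
        moreover have "real (card FC + card (Bc!0)) \<le> 5 * (real k + 1) * \<phi>"
          using cFCr B1(5) e4 e5 kphi \<phi> unfolding of_nat_add by linarith
        ultimately have "real (card (FC \<union> Bc!0)) \<le> 5 * (real k + 1) * \<phi>"
          by (smt (verit) of_nat_mono)
        then show ?thesis unfolding cF5 by (rule nat_le_ceil)
      qed
      ultimately show ?thesis by linarith
    qed
    have s6: "sum d (W - F5) \<le> sum d (W - (FC \<union> Bc!0))"
    proof (rule sum_bottom[OF finW])
      show "\<And>x y. x \<in> W - F5 \<Longrightarrow> y \<in> W - (W - F5) \<Longrightarrow> d x \<le> d y"
        using far_bottom[OF finW] F5_def d_def by auto
      show "\<And>x. x \<in> W \<Longrightarrow> 0 \<le> d x" using nnd WX by auto
    qed (use cc in auto)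
    have eqW: "W - (FC \<union> Bc!0) = W' - Bc!0" using W'_def by auto
    have key: "\<alpha> * sum d (W' - Bc!0) \<le> 3 * sum d (P2 - F2)"
    proof -
      have "\<alpha> * sum d (W' - Bc!0) \<le> 3 * (\<Sum>j<L. sum d (Bc!j \<inter> P2))" using s4 s5 by simp
      then show ?thesis using s3 s2 s1 by linarith
    qed
    have "1/9 * sum d (W - F5) \<le> 1/9 * sum d (W' - Bc!0)" using s6 eqW by simp
    also have "\<dots> = 1/(9*\<alpha>) * (\<alpha> * sum d (W' - Bc!0))" using \<alpha> by simp
    also have "\<dots> \<le> 1/(9*\<alpha>) * (3 * sum d (P2 - F2))"
      using key \<alpha> by (intro mult_left_mono) auto
    also have "\<dots> = 1/(3*\<alpha>) * sum d (P2 - F2)" by simp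
    finally show ?thesis using lhs rhs by simp
  qed
qed


lemma distT_nonneg:
  assumes "finite_metric_space X rho" "T \<subseteq> X" "T \<noteq> {}" "x \<in> X"
  shows "0 \<le> distT rho x T"
proof -
  have fX: "finite X" using assms(1) by (simp add: finite_metric_space_def)
  have "finite T" using fX assms(2) finite_subset by blast
  then have "Min ((\<lambda>y. rho x y) ` T) \<in> (\<lambda>y. rho x y) ` T" using assms(3) by (intro Min_in) auto
  then obtain y where "y \<in> T" "distT rho x T = rho x y" by (auto simp: distT_def)
  then show ?thesis using assms(1,2,4) by (auto simp: finite_metric_space_def)
qed

lemma phi_ge2:
  assumes k: "k \<ge> 2" and \<delta>: "0 < \<delta>" "\<delta> < 1" and \<alpha>: "0 < \<alpha>" "\<alpha> \<le> 1/6"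
  shows "phi k \<delta> \<alpha> \<ge> 2"
proof -
  have "64 \<le> 32 * real k" using k by simp
  also have "32 * real k \<le> 32 * real k / \<delta>" using \<delta> k by (simp add: le_divide_eq)
  finally have x: "64 \<le> 32 * real k / \<delta>" .
  have "exp 1 \<le> 32 * real k / \<delta>" using exp_le x by linarith
  then have L: "1 \<le> ln (32 * real k / \<delta>)" using x by (subst ln_ge_iff) auto
  have "2 * \<alpha> \<le> 150 * ln (32 * real k / \<delta>)" using L \<alpha> by linarith
  then show ?thesis unfolding phi_def using \<alpha> by (simp add: pos_le_divide_eq)
qed

theorem lemma8:
  fixes X :: "'a::linorder set" and rho :: "'a \<Rightarrow> 'a \<Rightarrow> real"
    and k :: nat and \<delta> \<alpha> :: real and P1 P2 T :: "'a set"
    and Bb Bc :: "'a set list"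
  assumes metric: "finite_metric_space X rho"
    and k: "k \<ge> 2" and \<delta>: "0 < \<delta>" "\<delta> < 1"
    and \<alpha>: "0 < \<alpha>" "\<alpha> \<le> 1/6" and \<alpha>n_int: "\<alpha> * real (card X) \<in> \<int>"
    and P: "P1 \<subseteq> X" "P2 \<subseteq> X" "P1 \<inter> P2 = {}"
      "real (card P1) = \<alpha> * real (card X)" "real (card P2) = \<alpha> * real (card X)"
    and T: "T \<subseteq> X" "T \<noteq> {}"
    and Bb: "linear_bin_division rho (phi k \<delta> \<alpha> / 3)
              ((X - P1) - far rho (real k * phi k \<delta> \<alpha>) (X - P1) T) T Bb"
    and Bc: "linear_bin_division rho (phi k \<delta> \<alpha> / 3)
              ((X - P1) - far rho (4 * (real k + 1) * phi k \<delta> \<alpha>) (X - P1) T) T Bc"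
  shows
   "((trivial_far (real k * phi k \<delta> \<alpha>) (X - P1) \<or>
      well_represented (X - P1) P2 (far rho (real k * phi k \<delta> \<alpha>) (X - P1) T)) \<and>
     (trivial_bin_division (phi k \<delta> \<alpha> / 3)
        ((X - P1) - far rho (real k * phi k \<delta> \<alpha>) (X - P1) T) \<or>
      well_represented_bins (X - P1) P2 Bb)
     \<longrightarrow> 1 / (3 * \<alpha>) * cost_r rho (2 * \<alpha> * (real k + 1) * phi k \<delta> \<alpha>) P2 T
         \<le> cost_r rho (real k * phi k \<delta> \<alpha>) X T)
    \<and>
    ((trivial_far (4 * (real k + 1) * phi k \<delta> \<alpha>) (X - P1) \<or>
      well_represented (X - P1) P2 (far rho (4 * (real k + 1) * phi k \<delta> \<alpha>) (X - P1) T)) \<and>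
     (trivial_bin_division (phi k \<delta> \<alpha> / 3)
        ((X - P1) - far rho (4 * (real k + 1) * phi k \<delta> \<alpha>) (X - P1) T) \<or>
      well_represented_bins (X - P1) P2 Bc)
     \<longrightarrow> 1 / 9 * cost_r rho (5 * (real k + 1) * phi k \<delta> \<alpha>) (X - P1) T
         \<le> 1 / (3 * \<alpha>) * cost_r rho (2 * \<alpha> * (real k + 1) * phi k \<delta> \<alpha>) P2 T)"
proof -
  have fin: "finite X" using metric by (simp add: finite_metric_space_def)
  have nn: "\<And>x. x \<in> X \<Longrightarrow> 0 \<le> distT rho x T" using distT_nonneg[OF metric T] by blast
  have ph: "phi k \<delta> \<alpha> \<ge> 2" using phi_ge2[OF k \<delta> \<alpha>] .
  show ?thesis
    apply (intro conjI impI)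
     apply (elim conjE)
     apply (rule part_a[OF fin nn k ph \<alpha> P Bb]; assumption)
    apply (elim conjE)
    apply (rule part_b[OF fin nn k ph \<alpha> P Bc]; assumption)
    done
qed

end
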